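(* Let $\mathcal{H}_X$, $\mathcal{H}_R$ be finite-dimensional Hilbert spaces, $U$ and $V_S$ unitaries on $\mathcal{H}_X$, and $S_{\mathrm{in}}=\{|\psi_1\rangle,\dots,|\psi_t\rangle\}$ a finite set of unit vectors in $\mathcal{H}_X\otimes\mathcal{H}_R$ such that $|\langle\psi_j|(U^\dagger V_S\otimes I)|\psi_j\rangle|=1$ for all $j$ (perfect training). If $S_{\mathrm{in}}$ is orthogonal partitioning resistant, then there exists $\theta\in(-\pi,\pi]$ such that $\langle\psi_j|(U^\dagger V_S\otimes I)|\psi_j\rangle=e^{i\theta}$ for all $|\psi_j\rangle\in S_{\mathrm{in}}$.
   Context: A set $S_{\mathrm{in}}$ of vectors is orthogonal partitioning resistant (OPR) iff for every partition $S_{\mathrm{in}}=A\cup B$ with $A\cap B=\emptyset$ one has $A\not\subseteq\mathrm{span}(B)^\perp$ (equivalently $B\not\subseteq\mathrm{span}(A)^\perp$). *)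

theory Defs
  imports "HOL-Analysis.Analysis"
begin

text \<open>Finite-dimensional complex Hilbert spaces are modelled as complex^'n for a
finite index type 'n; H_X \<otimes> H_R is complex^('x \<times> 'r).\<close>

definition cinner :: "complex^'n \<Rightarrow> complex^'n \<Rightarrow> complex" where
  "cinner x y = (\<Sum>i\<in>UNIV. cnj (x $ i) * y $ i)"

definition cadjoint :: "complex^'n^'m \<Rightarrow> complex^'m^'n" where
  "cadjoint A = (\<chi> i j. cnj (A $ j $ i))"

definition unitary :: "complex^'n^'n \<Rightarrow> bool" where
  "unitary U \<longleftrightarrow> cadjoint U ** U = mat 1 \<and> U ** cadjoint U = mat 1"

definition tensor_id :: "complex^'x::finite^'x \<Rightarrow> complex^('x \<times> 'r::finite)^('x \<times> 'r)" where
  "tensor_id A = (\<chi> p q. if snd p = snd q then A $ fst p $ fst q else 0)"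

definition cspan :: "(complex^'n) set \<Rightarrow> (complex^'n) set" where
  "cspan B = {x. \<exists>F c. finite F \<and> F \<subseteq> B \<and> x = (\<Sum>b\<in>F. c b *s b)}"

definition orth_compl :: "(complex^'n) set \<Rightarrow> (complex^'n) set" where
  "orth_compl V = {x. \<forall>y\<in>V. cinner y x = 0}"

text \<open>Orthogonal partitioning resistance; partitions are into two nonempty parts
(for a trivial partition with an empty part the condition fails vacuously).\<close>
definition OPR :: "(complex^'n) set \<Rightarrow> bool" where
  "OPR S \<longleftrightarrow> (\<forall>A B. A \<union> B = S \<and> A \<inter> B = {} \<and> A \<noteq> {} \<and> B \<noteq> {} \<longrightarrow>
      \<not> A \<subseteq> orth_compl (cspan B))"

end

theory Submission
  imports Defs
begin

lemma cinner_conj: "cinner y x = cnj (cinner x y)"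
  by (simp add: cinner_def mult.commute)

lemma cinner_sum_left: "cinner (\<Sum>b\<in>F. c b *s b) x = (\<Sum>b\<in>F. cnj (c b) * cinner b x)"
  by (simp add: cinner_def sum_component cnj_sum sum_distrib_right sum_distrib_left mult.assoc sum.swap[of _ F])

lemma cinner_self_eq_0: "cinner x x = 0 \<Longrightarrow> x = 0"
proof -
  assume h: "cinner x x = 0"
  have e: "\<And>i. cnj (x$i) * x$i = of_real ((cmod (x$i))^2)"
    by (metis complex_norm_square mult.commute of_real_power)
  have c: "cinner x x = of_real (\<Sum>i\<in>UNIV. (cmod (x$i))^2)"
    unfolding cinner_def e of_real_sum by simp
  have "(\<Sum>i\<in>UNIV. (cmod (x$i))^2) = 0" using h c by (metis of_real_eq_0_iff)
  hence "\<forall>i. (cmod (x$i))^2 = 0" by (simp add: sum_nonneg_eq_0_iff)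
  thus "x = 0" by (simp add: vec_eq_iff)
qed

lemma cinner_adj: "cinner (A *v x) y = cinner x (cadjoint A *v y)"
  by (simp add: cinner_def cadjoint_def matrix_vector_mult_def cnj_sum sum_distrib_right
      sum_distrib_left sum.swap[of _ "UNIV::'a set"] mult.assoc mult.left_commute)

lemma cinner_add_right: "cinner x (y + z) = cinner x y + cinner x z"
  by (simp add: cinner_def distrib_left sum.distrib)
lemma cinner_diff_right: "cinner x (y - z) = cinner x y - cinner x z"
  by (simp add: cinner_def right_diff_distrib sum_subtractf)
lemma cinner_diff_left: "cinner (y - z) x = cinner y x - cinner z x"
  by (simp add: cinner_def left_diff_distrib sum_subtractf)
lemma cinner_scale_right: "cinner x (c *s y) = c * cinner x y"
  by (simp add: cinner_def sum_distrib_left mult.left_commute)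
lemma cinner_scale_left: "cinner (c *s y) x = cnj c * cinner y x"
  by (simp add: cinner_def sum_distrib_left mult.assoc)

lemma cadjoint_mult: "cadjoint (A ** B) = cadjoint B ** cadjoint A"
  by (simp add: cadjoint_def matrix_matrix_mult_def vec_eq_iff cnj_sum mult.commute)

lemma tensor_id_mult: "tensor_id A ** tensor_id B = (tensor_id (A ** B) :: complex^('x::finite \<times> 'r::finite)^('x \<times> 'r))"
proof -
  { fix p q :: "'x \<times> 'r"
    have "(\<Sum>k\<in>UNIV. (if snd p = snd k then A $ fst p $ fst k else 0) * (if snd k = snd q then B $ fst k $ fst q else 0))
        = (\<Sum>x\<in>UNIV. \<Sum>r\<in>UNIV. (if snd p = r then A $ fst p $ x else 0) * (if r = snd q then B $ x $ fst q else 0))"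
      by (subst UNIV_Times_UNIV[symmetric], subst sum.cartesian_product) (simp add: case_prod_unfold)
    also have "\<dots> = (if snd p = snd q then (\<Sum>x\<in>UNIV. A $ fst p $ x * B $ x $ fst q) else 0)"
    proof -
      have m: "\<And>P Q (a::complex) b. (if P then a else 0) * (if Q then b else 0) = (if P \<and> Q then a*b else 0)" by simp
      have "\<And>x. (\<Sum>r\<in>UNIV. (if snd p = r \<and> r = snd q then A $ fst p $ x * B $ x $ fst q else 0))
             = (if snd p = snd q then A $ fst p $ x * B $ x $ fst q else 0)"
      proof -
        fix x
        have "\<And>r. (if snd p = r \<and> r = snd q then A $ fst p $ x * B $ x $ fst q else 0)
           = (if r = snd q then (if snd p = snd q then A $ fst p $ x * B $ x $ fst q else 0) else 0)" by auto
        thus "?thesis x" by (simp only: sum.delta' finite_UNIV) simp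
      qed
      thus ?thesis unfolding m by (simp add: sum.If_cases)
    qed
    finally have "(\<Sum>k\<in>UNIV. (if snd p = snd k then A $ fst p $ fst k else 0) * (if snd k = snd q then B $ fst k $ fst q else 0))
       = (if snd p = snd q then (\<Sum>x\<in>UNIV. A $ fst p $ x * B $ x $ fst q) else 0)" . }
  thus ?thesis by (simp add: tensor_id_def matrix_matrix_mult_def vec_eq_iff)
qed

lemma cadjoint_tensor: "cadjoint (tensor_id A) = (tensor_id (cadjoint A) :: complex^('x::finite \<times> 'r::finite)^('x \<times> 'r))"
  by (auto simp: cadjoint_def tensor_id_def vec_eq_iff)

lemma tensor_id_1: "tensor_id (mat 1) = (mat 1 :: complex^('x::finite \<times> 'r::finite)^('x \<times> 'r))"
  by (auto simp: mat_def tensor_id_def vec_eq_iff prod_eq_iff)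

lemma cadjoint_cadjoint: "cadjoint (cadjoint A) = A"
  by (simp add: cadjoint_def vec_eq_iff)

theorem lemma4:
  fixes U VS :: "complex^'x::finite^'x"
    and S :: "(complex^('x \<times> 'r::finite)) set"
  assumes "unitary U" and "unitary VS"
    and "finite S"
    and "\<forall>\<psi>\<in>S. cinner \<psi> \<psi> = 1"
    and "\<forall>\<psi>\<in>S. cmod (cinner \<psi> (tensor_id (cadjoint U ** VS) *v \<psi>)) = 1"
    and "OPR S"
  shows "\<exists>\<theta>\<in>{-pi<..pi}. \<forall>\<psi>\<in>S. cinner \<psi> (tensor_id (cadjoint U ** VS) *v \<psi>) = exp (\<i> * of_real \<theta>)"
proof -
  define W :: "complex^('x \<times> 'r)^('x \<times> 'r)" where "W = tensor_id (cadjoint U ** VS)"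
  define l where "l = (\<lambda>\<psi>. cinner \<psi> (W *v \<psi>))"
  have M: "cadjoint (cadjoint U ** VS) ** (cadjoint U ** VS) = mat 1"
  proof -
    have "cadjoint (cadjoint U ** VS) ** (cadjoint U ** VS) = cadjoint VS ** ((U ** cadjoint U) ** VS)"
      by (simp add: cadjoint_mult cadjoint_cadjoint matrix_mul_assoc)
    also have "\<dots> = mat 1" using assms(1,2) by (simp add: unitary_def)
    finally show ?thesis .
  qed
  have WW: "cadjoint W ** W = mat 1"
    unfolding W_def cadjoint_tensor tensor_id_mult M tensor_id_1 ..
  have pres: "cinner (W *v x) (W *v y) = cinner x y" for x y
    by (simp add: cinner_adj matrix_vector_mul_assoc WW)
  have l1: "l \<psi> * cnj (l \<psi>) = 1" if "\<psi> \<in> S" for \<psi>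
  proof -
    have "cmod (l \<psi>) = 1" using assms(5) that by (simp add: l_def W_def)
    thus ?thesis by (metis complex_norm_square mult.commute of_real_1 power_one)
  qed
  have eig: "W *v \<psi> = l \<psi> *s \<psi>" if "\<psi> \<in> S" for \<psi>
  proof -
    define v where "v = W *v \<psi> - l \<psi> *s \<psi>"
    have a: "cinner (W *v \<psi>) (W *v \<psi>) = 1" using pres assms(4) that by simp
    have b: "cinner (W *v \<psi>) \<psi> = cnj (l \<psi>)" by (simp add: l_def cinner_conj[of "W *v \<psi>"])
    have c: "cinner \<psi> \<psi> = 1" using assms(4) that by simp
    have d: "cinner \<psi> (W *v \<psi>) = l \<psi>" by (simp add: l_def)
    have "cinner v v = 1 - l \<psi> * cnj (l \<psi>)"
      unfolding v_def cinner_diff_left cinner_diff_right cinner_scale_left cinner_scale_right a b c d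
      by (simp add: algebra_simps)
    hence "cinner v v = 0" using l1[OF that] by simp
    hence "v = 0" by (rule cinner_self_eq_0)
    thus ?thesis by (simp add: v_def)
  qed
  have orth: "cinner a b = 0" if "a \<in> S" "b \<in> S" "l a \<noteq> l b" for a b
  proof (rule ccontr)
    assume nz: "cinner a b \<noteq> 0"
    have "cinner a b = l b * cnj (l a) * cinner a b"
      using pres[of a b] eig[OF that(1)] eig[OF that(2)]
      by (simp add: cinner_scale_left cinner_scale_right)
    hence "l b * cnj (l a) = 1" using nz by (metis mult_cancel_right1)
    hence h: "l b * cnj (l a) = 1" .
    have "l a * cnj (l a) * l b = l a * (l b * cnj (l a))" by (simp only: ac_simps)
    also have "\<dots> = l a" using h by simp
    finally have "l a * cnj (l a) * l b = l a" .
    hence "l b = l a" using l1[OF that(1)] by simp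
    thus False using that(3) by simp
  qed
  show ?thesis
  proof (cases "S = {}")
    case True
    show ?thesis by (rule bexI[of _ 0]) (auto simp: True)
  next
    case False
    then obtain \<psi>0 where p0: "\<psi>0 \<in> S" by blast
    show ?thesis
    proof (cases "\<forall>\<psi>\<in>S. l \<psi> = l \<psi>0")
      case True
      have "cmod (l \<psi>0) = 1" using assms(5) p0 by (simp add: l_def W_def)
      hence "exp (\<i> * of_real (Arg (l \<psi>0))) = l \<psi>0"
      proof -
        assume n: "cmod (l \<psi>0) = 1"
        hence "l \<psi>0 \<noteq> 0" by auto
        hence "cis (Arg (l \<psi>0)) = sgn (l \<psi>0)" by (rule cis_Arg)
        also have "\<dots> = l \<psi>0" using n by (simp add: sgn_div_norm)
        finally show ?thesis by (simp add: cis_conv_exp)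
      qed
      thus ?thesis using True Arg_bounded[of "l \<psi>0"]
        by (intro bexI[of _ "Arg (l \<psi>0)"]) (auto simp: l_def W_def)
    next
      case False
      define A where "A = {\<psi>\<in>S. l \<psi> = l \<psi>0}"
      define B where "B = S - A"
      have "A \<union> B = S \<and> A \<inter> B = {} \<and> A \<noteq> {} \<and> B \<noteq> {}"
        using False p0 by (auto simp: A_def B_def)
      hence nsub: "\<not> A \<subseteq> orth_compl (cspan B)" using assms(6) unfolding OPR_def by blast
      have "A \<subseteq> orth_compl (cspan B)"
      proof
        fix a assume aA: "a \<in> A"
        show "a \<in> orth_compl (cspan B)"
          unfolding orth_compl_def mem_Collect_eq
        proof
          fix y assume "y \<in> cspan B"
          then obtain F c where F: "finite F" "F \<subseteq> B" "y = (\<Sum>b\<in>F. c b *s b)"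
            unfolding cspan_def by blast
          have "\<forall>b\<in>F. cinner b a = 0"
          proof
            fix b assume "b \<in> F"
            hence bS: "b \<in> S" "l b \<noteq> l a" using F(2) aA by (auto simp: A_def B_def)
            have aS: "a \<in> S" using aA by (simp add: A_def)
            show "cinner b a = 0" by (rule orth[OF bS(1) aS bS(2)])
          qed
          thus "cinner y a = 0" unfolding F(3) cinner_sum_left by simp
        qed
      qed
      thus ?thesis using nsub by blast
    qed
  qed
qed

end
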